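(* Let $\mathfrak S=(S,\xrightarrow{F},\le)$ be a complete WSTS and $s_0\in S$. Then $Clover_{\mathfrak S}(s_0)$ is finite, and $cl(Cover_{\mathfrak S}(s_0))=\downarrow Clover_{\mathfrak S}(s_0)$.
   Context: A complete WSTS is a functional transition system $(S,\xrightarrow{F},\le)$ ($F$ finite set of partial maps; $s\to f(s)$ when $s\in\operatorname{dom}f$) such that $(S,\le)$ is a well partial order (well-founded, no infinite antichain), a dcpo (every directed subset $D$ has a lub $\bigvee D$) which is continuous (for each $x$, $\{y\mid y\ll x\}$ is directed with lub $x$; $y\ll x$ iff every directed $D$ with $x\le\bigvee D$ has an element above $y$), and every $f\in F$ is partial continuous: its domain is Scott-open and $f(\bigvee D)=\bigvee f(D)$ for every directed $D\subseteq\operatorname{dom}f$. Scott-open: upward-closed $U$ such that every directed $D$ with $\bigvee D\in U$ meets $U$; $cl(A)$ is the smallest Scott-closed (complement of Scott-open) set containing $A$. $Cover_{\mathfrak S}(s_0)=\downarrow Post^*(\downarrow s_0)$ where $Post^*$ is the reachability (reflexive-transitive) closure; $\operatorname{Lub}(E)=\{\bigvee D\mid D\subseteq E\text{ directed}\}$; $Clover_{\mathfrak S}(s_0)=\operatorname{Max}\operatorname{Lub}(Cover_{\mathfrak S}(s_0))$, $\operatorname{Max}$ denoting the set of maximal elements. *)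

theory Defs
  imports Main
begin

text \<open>The state set S is the whole of the type 'a; the quasi-order is an explicit
relation le; transition functions are partial maps 'a \<Rightarrow> 'a option.\<close>

definition directed :: "('a \<Rightarrow> 'a \<Rightarrow> bool) \<Rightarrow> 'a set \<Rightarrow> bool" where
  "directed le D \<longleftrightarrow> D \<noteq> {} \<and> (\<forall>x\<in>D. \<forall>y\<in>D. \<exists>z\<in>D. le x z \<and> le y z)"

definition is_lub :: "('a \<Rightarrow> 'a \<Rightarrow> bool) \<Rightarrow> 'a set \<Rightarrow> 'a \<Rightarrow> bool" where
  "is_lub le D x \<longleftrightarrow> (\<forall>d\<in>D. le d x) \<and> (\<forall>u. (\<forall>d\<in>D. le d u) \<longrightarrow> le x u)"

definition lub :: "('a \<Rightarrow> 'a \<Rightarrow> bool) \<Rightarrow> 'a set \<Rightarrow> 'a" where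
  "lub le D = (THE x. is_lub le D x)"

definition partial_order_on_type :: "('a \<Rightarrow> 'a \<Rightarrow> bool) \<Rightarrow> bool" where
  "partial_order_on_type le \<longleftrightarrow> (\<forall>x. le x x) \<and> (\<forall>x y z. le x y \<longrightarrow> le y z \<longrightarrow> le x z)
     \<and> (\<forall>x y. le x y \<longrightarrow> le y x \<longrightarrow> x = y)"

definition antichain :: "('a \<Rightarrow> 'a \<Rightarrow> bool) \<Rightarrow> 'a set \<Rightarrow> bool" where
  "antichain le A \<longleftrightarrow> (\<forall>x\<in>A. \<forall>y\<in>A. x \<noteq> y \<longrightarrow> \<not> le x y)"

definition wpo :: "('a \<Rightarrow> 'a \<Rightarrow> bool) \<Rightarrow> bool" where
  "wpo le \<longleftrightarrow> partial_order_on_type le \<and> wfP (\<lambda>x y. le x y \<and> x \<noteq> y)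
     \<and> (\<forall>A. antichain le A \<longrightarrow> finite A)"

definition dcpo :: "('a \<Rightarrow> 'a \<Rightarrow> bool) \<Rightarrow> bool" where
  "dcpo le \<longleftrightarrow> (\<forall>D. directed le D \<longrightarrow> (\<exists>x. is_lub le D x))"

definition way_below :: "('a \<Rightarrow> 'a \<Rightarrow> bool) \<Rightarrow> 'a \<Rightarrow> 'a \<Rightarrow> bool" where
  "way_below le y x \<longleftrightarrow> (\<forall>D. directed le D \<longrightarrow> le x (lub le D) \<longrightarrow> (\<exists>d\<in>D. le y d))"

definition continuous_dcpo :: "('a \<Rightarrow> 'a \<Rightarrow> bool) \<Rightarrow> bool" where
  "continuous_dcpo le \<longleftrightarrow> (\<forall>x. directed le {y. way_below le y x} \<and> lub le {y. way_below le y x} = x)"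

definition scott_open :: "('a \<Rightarrow> 'a \<Rightarrow> bool) \<Rightarrow> 'a set \<Rightarrow> bool" where
  "scott_open le U \<longleftrightarrow> (\<forall>x y. x \<in> U \<longrightarrow> le x y \<longrightarrow> y \<in> U)
     \<and> (\<forall>D. directed le D \<longrightarrow> lub le D \<in> U \<longrightarrow> D \<inter> U \<noteq> {})"

definition scott_closed :: "('a \<Rightarrow> 'a \<Rightarrow> bool) \<Rightarrow> 'a set \<Rightarrow> bool" where
  "scott_closed le C \<longleftrightarrow> scott_open le (- C)"

definition scott_cl :: "('a \<Rightarrow> 'a \<Rightarrow> bool) \<Rightarrow> 'a set \<Rightarrow> 'a set" where
  "scott_cl le A = \<Inter> {C. scott_closed le C \<and> A \<subseteq> C}"

definition pdom :: "('a \<Rightarrow> 'a option) \<Rightarrow> 'a set" where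
  "pdom f = {s. f s \<noteq> None}"

definition partial_continuous :: "('a \<Rightarrow> 'a \<Rightarrow> bool) \<Rightarrow> ('a \<Rightarrow> 'a option) \<Rightarrow> bool" where
  "partial_continuous le f \<longleftrightarrow> scott_open le (pdom f)
     \<and> (\<forall>D. directed le D \<longrightarrow> D \<subseteq> pdom f \<longrightarrow>
            is_lub le ((\<lambda>s. the (f s)) ` D) (the (f (lub le D))))"

definition complete_wsts :: "('a \<Rightarrow> 'a option) set \<Rightarrow> ('a \<Rightarrow> 'a \<Rightarrow> bool) \<Rightarrow> bool" where
  "complete_wsts F le \<longleftrightarrow> finite F \<and> wpo le \<and> dcpo le \<and> continuous_dcpo le
     \<and> (\<forall>f\<in>F. partial_continuous le f)"

definition step :: "('a \<Rightarrow> 'a option) set \<Rightarrow> 'a \<Rightarrow> 'a \<Rightarrow> bool" where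
  "step F s t \<longleftrightarrow> (\<exists>f\<in>F. f s = Some t)"

definition down :: "('a \<Rightarrow> 'a \<Rightarrow> bool) \<Rightarrow> 'a set \<Rightarrow> 'a set" where
  "down le A = {x. \<exists>a\<in>A. le x a}"

definition post_star :: "('a \<Rightarrow> 'a option) set \<Rightarrow> 'a set \<Rightarrow> 'a set" where
  "post_star F A = {t. \<exists>s\<in>A. (step F)\<^sup>*\<^sup>* s t}"

definition cover :: "('a \<Rightarrow> 'a option) set \<Rightarrow> ('a \<Rightarrow> 'a \<Rightarrow> bool) \<Rightarrow> 'a \<Rightarrow> 'a set" where
  "cover F le s0 = down le (post_star F (down le {s0}))"

definition Lub_set :: "('a \<Rightarrow> 'a \<Rightarrow> bool) \<Rightarrow> 'a set \<Rightarrow> 'a set" where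
  "Lub_set le E = {lub le D | D. D \<subseteq> E \<and> directed le D}"

definition Max_el :: "('a \<Rightarrow> 'a \<Rightarrow> bool) \<Rightarrow> 'a set \<Rightarrow> 'a set" where
  "Max_el le A = {x \<in> A. \<forall>y\<in>A. le x y \<longrightarrow> y = x}"

definition clover :: "('a \<Rightarrow> 'a option) set \<Rightarrow> ('a \<Rightarrow> 'a \<Rightarrow> bool) \<Rightarrow> 'a \<Rightarrow> 'a set" where
  "clover F le s0 = Max_el le (Lub_set le (cover F le s0))"

end

theory Submission
  imports Defs
begin

lemma lub_eq:
  assumes po: "partial_order_on_type le" and h: "is_lub le D x"
  shows "lub le D = x"
proof -
  have "\<And>y. is_lub le D y \<Longrightarrow> y = x"
    using h po unfolding is_lub_def partial_order_on_type_def by blast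
  then show ?thesis unfolding lub_def using h by (rule the_equality[rotated])
qed

lemma lub_dir:
  assumes po: "partial_order_on_type le" and dc: "dcpo le" and d: "directed le D"
  shows "is_lub le D (lub le D)"
proof -
  obtain x where "is_lub le D x" using dc d unfolding dcpo_def by blast
  then show ?thesis using lub_eq[OF po] by simp
qed

lemma dir_fin:
  assumes po: "partial_order_on_type le" and d: "directed le D"
  shows "finite A \<Longrightarrow> A \<subseteq> D \<Longrightarrow> \<exists>e\<in>D. \<forall>a\<in>A. le a e"
proof (induction A rule: finite_induct)
  case empty
  then show ?case using d unfolding directed_def by blast
next
  case (insert x A)
  then obtain e where e: "e \<in> D" "\<forall>a\<in>A. le a e" by blast
  obtain z where z: "z \<in> D" "le x z" "le e z" using d e(1) insert.prems unfolding directed_def by blast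
  have "\<forall>a\<in>insert x A. le a z" using z e po unfolding partial_order_on_type_def by blast
  then show ?case using z by blast
qed

lemma wb_mono:
  assumes po: "partial_order_on_type le" and "way_below le y x" and "le x x'"
  shows "way_below le y x'"
  using assms unfolding way_below_def partial_order_on_type_def by blast

lemma zorn_part:
  assumes po: "partial_order_on_type le" and dc: "dcpo le" and cd: "continuous_dcpo le"
    and down: "\<And>x y. y \<in> C \<Longrightarrow> le x y \<Longrightarrow> x \<in> C"
    and x: "x \<in> Lub_set le C"
  shows "\<exists>m\<in>Max_el le (Lub_set le C). le x m"
proof -
  define A where "A = {z \<in> Lub_set le C. le x z}"
  define r where "r = {(a,b). a \<in> A \<and> b \<in> A \<and> le a b}"
  have xA: "x \<in> A" using x po unfolding A_def partial_order_on_type_def by blast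
  have F: "Field r = A" using po unfolding r_def Field_def partial_order_on_type_def by auto
  have P: "Partial_order r"
    using po F unfolding partial_order_on_def preorder_on_def refl_on_def trans_on_def antisym_on_def
      r_def partial_order_on_type_def by auto
  have "\<exists>m\<in>Field r. \<forall>a\<in>Field r. (m, a) \<in> r \<longrightarrow> a = m"
  proof (rule Zorns_po_lemma[OF P])
    fix K assume K: "K \<in> Chains r"
    have KA: "K \<subseteq> A" using K unfolding Chains_def r_def by blast
    show "\<exists>u\<in>Field r. \<forall>a\<in>K. (a, u) \<in> r"
    proof (cases "K = {}")
      case True
      then show ?thesis using xA F by blast
    next
      case False
      then obtain k0 where k0: "k0 \<in> K" by blast
      define D where "D = {y. \<exists>k\<in>K. way_below le y k}"
      have wbdir: "\<And>k. directed le {y. way_below le y k}" and wblub: "\<And>k. lub le {y. way_below le y k} = k"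
        using cd unfolding continuous_dcpo_def by auto
      have DC: "D \<subseteq> C"
      proof
        fix y assume "y \<in> D"
        then obtain k where k: "k \<in> K" "way_below le y k" unfolding D_def by blast
        then obtain E where E: "k = lub le E" "E \<subseteq> C" "directed le E"
          using KA unfolding A_def Lub_set_def by blast
        have "le k (lub le E)" using E po unfolding partial_order_on_type_def by simp
        then obtain e where "e \<in> E" "le y e" using k(2) E(3) unfolding way_below_def by blast
        then show "y \<in> C" using down E(2) by blast
      qed
      have Ddir: "directed le D"
        unfolding directed_def
      proof (intro conjI ballI)
        obtain y where "y \<in> {y. way_below le y k0}" using wbdir[of k0] unfolding directed_def by blast
        then show "D \<noteq> {}" using k0 unfolding D_def by blast
      next
        fix y1 y2 assume "y1 \<in> D" "y2 \<in> D"
        then obtain k1 k2 where k: "k1 \<in> K" "way_below le y1 k1" "k2 \<in> K" "way_below le y2 k2"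
          unfolding D_def by blast
        have "(k1,k2) \<in> r \<or> (k2,k1) \<in> r" using K k unfolding Chains_def by blast
        then have "le k1 k2 \<or> le k2 k1" unfolding r_def by blast
        then show "\<exists>z\<in>D. le y1 z \<and> le y2 z"
        proof
          assume "le k1 k2"
          then have "way_below le y1 k2" using wb_mono[OF po k(2)] by blast
          then obtain z where "way_below le z k2" "le y1 z" "le y2 z"
            using wbdir[of k2] k(4) unfolding directed_def by blast
          then show ?thesis using k(3) unfolding D_def by blast
        next
          assume "le k2 k1"
          then have "way_below le y2 k1" using wb_mono[OF po k(4)] by blast
          then obtain z where "way_below le z k1" "le y1 z" "le y2 z"
            using wbdir[of k1] k(2) unfolding directed_def by blast
          then show ?thesis using k(1) unfolding D_def by blast
        qed
      qed
      define u where "u = lub le D"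
      have ub: "\<And>k. k \<in> K \<Longrightarrow> le k u"
      proof -
        fix k assume k: "k \<in> K"
        have "\<forall>d\<in>{y. way_below le y k}. le d u"
          using lub_dir[OF po dc Ddir] k unfolding u_def is_lub_def D_def by blast
        then have "le (lub le {y. way_below le y k}) u"
          using lub_dir[OF po dc wbdir[of k]] unfolding is_lub_def by blast
        then show "le k u" using wblub by simp
      qed
      have "u \<in> Lub_set le C" unfolding Lub_set_def u_def using DC Ddir by blast
      moreover have "le x u" using ub[OF k0] KA k0 po unfolding A_def partial_order_on_type_def by blast
      ultimately have uA: "u \<in> A" unfolding A_def by blast
      show ?thesis using uA ub KA F unfolding r_def by blast
    qed
  qed
  then obtain m where m: "m \<in> A" "\<And>a. a \<in> A \<Longrightarrow> le m a \<Longrightarrow> a = m"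
    using F unfolding r_def by auto
  have "m \<in> Max_el le (Lub_set le C)"
    unfolding Max_el_def
  proof (intro CollectI conjI ballI impI)
    show "m \<in> Lub_set le C" using m unfolding A_def by blast
    fix y assume "y \<in> Lub_set le C" "le m y"
    then have "y \<in> A" using m(1) po unfolding A_def partial_order_on_type_def by blast
    then show "y = m" using m \<open>le m y\<close> by blast
  qed
  then show ?thesis using m(1) unfolding A_def by blast
qed

lemma down_closed_scott:
  assumes po: "partial_order_on_type le" and dc: "dcpo le" and fin: "finite M"
  shows "scott_closed le (down le M)"
  unfolding scott_closed_def scott_open_def
proof (intro conjI allI impI)
  fix x y assume "x \<in> - down le M" "le x y"
  then show "y \<in> - down le M" using po unfolding down_def partial_order_on_type_def by blast
next
  fix D assume d: "directed le D" and l: "lub le D \<in> - down le M"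
  show "D \<inter> - down le M \<noteq> {}"
  proof
    assume "D \<inter> - down le M = {}"
    then have sub: "\<forall>d\<in>D. \<exists>m\<in>M. le d m" unfolding down_def by blast
    have "\<exists>m\<in>M. \<forall>d\<in>D. le d m"
    proof (rule ccontr)
      assume "\<not> ?thesis"
      then have "\<forall>m\<in>M. \<exists>d\<in>D. \<not> le d m" by blast
      then obtain g where g: "\<And>m. m \<in> M \<Longrightarrow> g m \<in> D \<and> \<not> le (g m) m" by metis
      have "finite (g ` M)" "g ` M \<subseteq> D" using fin g by auto
      then obtain e where e: "e \<in> D" "\<forall>a\<in>g ` M. le a e" using dir_fin[OF po d] by blast
      then obtain m where "m \<in> M" "le e m" using sub by blast
      then show False using g e po unfolding partial_order_on_type_def by blast
    qed
    then obtain m where "m \<in> M" "\<forall>d\<in>D. le d m" by blast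
    then have "le (lub le D) m" using lub_dir[OF po dc d] unfolding is_lub_def by blast
    then show False using l \<open>m \<in> M\<close> unfolding down_def by blast
  qed
qed

lemma closed_lub:
  assumes po: "partial_order_on_type le" and dc: "dcpo le" and K: "scott_closed le K"
    and d: "directed le D" "D \<subseteq> K"
  shows "lub le D \<in> K"
  using K d unfolding scott_closed_def scott_open_def by blast

lemma closed_down:
  assumes K: "scott_closed le K" and "y \<in> K" "le x y"
  shows "x \<in> K"
  using assms unfolding scott_closed_def scott_open_def by blast

theorem proposition3p7:
  fixes F :: "('a \<Rightarrow> 'a option) set" and le :: "'a \<Rightarrow> 'a \<Rightarrow> bool" and s0 :: 'a
  assumes "complete_wsts F le"
  shows "finite (clover F le s0) \<and> scott_cl le (cover F le s0) = down le (clover F le s0)"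
proof -
  have w: "wpo le" and dc: "dcpo le" and cd: "continuous_dcpo le"
    using assms unfolding complete_wsts_def by auto
  have po: "partial_order_on_type le" using w unfolding wpo_def by blast
  define C where "C = cover F le s0"
  define M where "M = clover F le s0"
  have M: "M = Max_el le (Lub_set le C)" unfolding M_def C_def clover_def by simp
  have Cd: "\<And>x y. y \<in> C \<Longrightarrow> le x y \<Longrightarrow> x \<in> C"
    using po unfolding C_def cover_def down_def partial_order_on_type_def by blast
  have finM: "finite M"
  proof -
    have "antichain le M" unfolding M antichain_def Max_el_def by blast
    then show ?thesis using w unfolding wpo_def by blast
  qed
  have CL: "C \<subseteq> Lub_set le C"
  proof
    fix c assume c: "c \<in> C"
    have "directed le {c}" using po unfolding directed_def partial_order_on_type_def by blast
    moreover have "lub le {c} = c" using po by (intro lub_eq) (auto simp: is_lub_def partial_order_on_type_def)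
    ultimately show "c \<in> Lub_set le C" unfolding Lub_set_def using c by (metis (mono_tags, lifting) CollectI empty_subsetI insert_subset)
  qed
  have LM: "Lub_set le C \<subseteq> down le M"
  proof
    fix x assume "x \<in> Lub_set le C"
    then have "\<exists>m\<in>Max_el le (Lub_set le C). le x m" using zorn_part[OF po dc cd, of C] Cd by blast
    then show "x \<in> down le M" unfolding M down_def by blast
  qed
  have "scott_cl le C \<subseteq> down le M"
    unfolding scott_cl_def using down_closed_scott[OF po dc finM] CL LM by blast
  moreover have "down le M \<subseteq> scott_cl le C"
    unfolding scott_cl_def
  proof (intro subsetI InterI)
    fix x K assume x: "x \<in> down le M" and "K \<in> {C'. scott_closed le C' \<and> C \<subseteq> C'}"
    then have K: "scott_closed le K" "C \<subseteq> K" by auto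
    obtain m where m: "m \<in> M" "le x m" using x unfolding down_def by blast
    then obtain E where E: "m = lub le E" "E \<subseteq> C" "directed le E"
      unfolding M Max_el_def Lub_set_def by blast
    have "m \<in> K" using closed_lub[OF po dc K(1) E(3)] E K(2) by blast
    then show "x \<in> K" using closed_down[OF K(1)] m by blast
  qed
  ultimately show ?thesis using finM unfolding M_def C_def by blast
qed

end
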